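(* Let $(V,E,\sigma)$ be an influence graph and let $\mu : V \rightarrow \{+,-\}$ be a (partial) vertex labeling. If $W\subseteq V$ is a Minimal Inconsistent Core, then there is an answer set $X$ of the disjunctive logic program $P_D\cup\tau((V,E,\sigma),\mu)$ such that $\{i \mid \mathit{active}(i)\in X\}=W$.
   Context: An influence graph is a triple $(V,E,\sigma)$ where $V$ is a finite set of vertices, $E\subseteq V\times V$ is a set of directed edges (an edge from $j$ to $i$ is written $j\rightarrow i$), and $\sigma : E\rightarrow\{+,-\}$ is a partial labeling of the edges; in addition, some vertices of $V$ are designated as input vertices. Signs are multiplied as numbers ($++=--=+$, $+-=-+=-$). Given a partial vertex labeling $\mu:V\rightarrow\{+,-\}$ and total labelings $\sigma':E\rightarrow\{+,-\}$, $\mu':V\rightarrow\{+,-\}$, the value $\mu'(i)$ is called consistent if there is an edge $j\rightarrow i$ in $E$ with $\mu'(i)=\mu'(j)\sigma'(j,i)$. A subset $W\subseteq V$ is a Minimal Inconsistent Core (MIC) if (1) for all total extensions $\sigma'$ of $\sigma$ and $\mu'$ of $\mu$ there is some non-input vertex $i\in W$ such that $\mu'(i)$ is inconsistent, and (2) for every proper subset $W'\subset W$ there are total extensions $\sigma'$ of $\sigma$ and $\mu'$ of $\mu$ such that $\mu'(i)$ is consistent for every non-input vertex $i\in W'$. Answer set semantics: a disjunctive logic program is a set of rules $a_1;\dots;a_l \leftarrow b_1,\dots,b_m,\mathit{not}\ c_1,\dots,\mathit{not}\ c_n$ (with $l=0$ giving an integrity constraint, whose empty head is false). Rules with (capitalized)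 variables stand for all their ground instances obtained by substituting constants occurring in the program; a built-in comparison such as $S\neq T$ keeps only instances where the substituted constants differ. A conditional literal $\mathit{opposite}(U,V):\mathit{edge}(U,V)$ in a body, for fixed $V=v$, stands for the conjunction of all atoms $\mathit{opposite}(u,v)$ such that $\mathit{edge}(u,v)$ is a fact of the program (the empty conjunction if there is none). For a set $X$ of ground atoms, the reduct $P^X$ consists of $\{a_1,\dots,a_l\}\leftarrow b_1,\dots,b_m$ for each ground rule with $\{c_1,\dots,c_n\}\cap X=\emptyset$; $X$ is an answer set of $P$ if it is a $\subseteq$-minimal model of $P^X$. Here $+$ and $-$ are constants and vertex names are constants. The instance $\tau((V,E,\sigma),\mu)$ is the set of facts: $\mathit{vertex}(i)$ for each $i\in V$; $\mathit{edge}(j,i)$ for each $j\rightarrow i$ in $E$; $\mathit{observedE}(j,i,s)$ whenever $\sigma(j,i)=s$ is defined; $\mathit{observedV}(i,s)$ whenever $\mu(i)=s$ is defined; $\mathit{input}(i)$ for each input vertex $i$. The program $P_D$ consists of the rules $\mathit{labelV}(V,S)\leftarrow \mathit{observedV}(V,S)$; $\mathit{labelE}(U,V,S)\leftarrow \mathit{observedE}(U,V,S)$; $\mathit{active}(V);\mathit{inactive}(V)\leftarrow \mathit{vertex}(V),\mathit{not}\ \mathit{input}(V)$; $\mathit{edgeMIC}(U,V)\leftarrow \mathit{edge}(U,V),\mathit{active}(V)$; $\mathit{vertexMIC}(U)\leftarrow \mathit{edgeMIC}(U,V)$; $\mathit{vertexMIC}(V)\leftarrow \mathit{active}(V)$;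 $\mathit{labelV}(V,+);\mathit{labelV}(V,-)\leftarrow \mathit{vertexMIC}(V)$; $\mathit{labelE}(U,V,+);\mathit{labelE}(U,V,-)\leftarrow \mathit{edgeMIC}(U,V)$; $\mathit{opposite}(U,V)\leftarrow \mathit{labelE}(U,V,-),\mathit{labelV}(U,S),\mathit{labelV}(V,S)$; $\mathit{opposite}(U,V)\leftarrow \mathit{labelE}(U,V,+),\mathit{labelV}(U,S),\mathit{labelV}(V,T),S\neq T$; $\mathit{bottom}\leftarrow \mathit{active}(V),\mathit{opposite}(U,V):\mathit{edge}(U,V)$; $\leftarrow \mathit{not}\ \mathit{bottom}$; $\mathit{labelV}(V,+)\leftarrow \mathit{bottom},\mathit{vertex}(V)$; $\mathit{labelV}(V,-)\leftarrow \mathit{bottom},\mathit{vertex}(V)$; $\mathit{labelE}(U,V,+)\leftarrow \mathit{bottom},\mathit{edge}(U,V)$; $\mathit{labelE}(U,V,-)\leftarrow \mathit{bottom},\mathit{edge}(U,V)$; $\mathit{labelV'}(W,V,+);\mathit{labelV'}(W,V,-)\leftarrow \mathit{active}(W),\mathit{vertexMIC}(V)$; $\mathit{labelE'}(W,U,V,+);\mathit{labelE'}(W,U,V,-)\leftarrow \mathit{active}(W),\mathit{edgeMIC}(U,V)$; $\mathit{labelV'}(W,V,S)\leftarrow \mathit{active}(W),\mathit{observedV}(V,S)$; $\mathit{labelE'}(W,U,V,S)\leftarrow \mathit{active}(W),\mathit{observedE}(U,V,S)$; $\mathit{receive'}(W,V,+)\leftarrow \mathit{labelE'}(W,U,V,S),\mathit{labelV'}(W,U,S),V\neq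 W$; $\mathit{receive'}(W,V,-)\leftarrow \mathit{labelE'}(W,U,V,S),\mathit{labelV'}(W,U,T),V\neq W,S\neq T$; $\leftarrow \mathit{labelV'}(W,V,S),\mathit{active}(V),V\neq W,\mathit{not}\ \mathit{receive'}(W,V,S)$. *)

theory Defs
  imports Main
begin

datatype sign = Pos | Neg

fun smult :: "sign \<Rightarrow> sign \<Rightarrow> sign" where
  "smult Pos s = s"
| "smult Neg Pos = Neg"
| "smult Neg Neg = Pos"

text \<open>An influence graph: finite vertex set V, edges E (a pair (j,i) is the edge j -> i),
  partial edge labeling sigma (defined only on edges), set I of input vertices.\<close>
definition influence_graph ::
  "'v set \<Rightarrow> ('v \<times> 'v) set \<Rightarrow> ('v \<times> 'v \<Rightarrow> sign option) \<Rightarrow> 'v set \<Rightarrow> bool" where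
  "influence_graph V E \<sigma> I \<longleftrightarrow>
     finite V \<and> E \<subseteq> V \<times> V \<and> {e. \<sigma> e \<noteq> None} \<subseteq> E \<and> I \<subseteq> V"

definition vertex_labeling :: "'v set \<Rightarrow> ('v \<Rightarrow> sign option) \<Rightarrow> bool" where
  "vertex_labeling V \<mu> \<longleftrightarrow> {i. \<mu> i \<noteq> None} \<subseteq> V"

definition extendsE :: "('v \<times> 'v) set \<Rightarrow> ('v \<times> 'v \<Rightarrow> sign option) \<Rightarrow> ('v \<times> 'v \<Rightarrow> sign) \<Rightarrow> bool" where
  "extendsE E \<sigma> \<sigma>' \<longleftrightarrow> (\<forall>e\<in>E. \<forall>s. \<sigma> e = Some s \<longrightarrow> \<sigma>' e = s)"

definition extendsV :: "'v set \<Rightarrow> ('v \<Rightarrow> sign option) \<Rightarrow> ('v \<Rightarrow> sign) \<Rightarrow> bool" where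
  "extendsV V \<mu> \<mu>' \<longleftrightarrow> (\<forall>i\<in>V. \<forall>s. \<mu> i = Some s \<longrightarrow> \<mu>' i = s)"

definition consistent :: "('v \<times> 'v) set \<Rightarrow> ('v \<times> 'v \<Rightarrow> sign) \<Rightarrow> ('v \<Rightarrow> sign) \<Rightarrow> 'v \<Rightarrow> bool" where
  "consistent E \<sigma>' \<mu>' i \<longleftrightarrow> (\<exists>j. (j, i) \<in> E \<and> \<mu>' i = smult (\<mu>' j) (\<sigma>' (j, i)))"

definition is_MIC ::
  "'v set \<Rightarrow> ('v \<times> 'v) set \<Rightarrow> ('v \<times> 'v \<Rightarrow> sign option) \<Rightarrow> 'v set \<Rightarrow> ('v \<Rightarrow> sign option)
   \<Rightarrow> 'v set \<Rightarrow> bool" where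
  "is_MIC V E \<sigma> I \<mu> W \<longleftrightarrow>
     W \<subseteq> V \<and>
     (\<forall>\<sigma>' \<mu>'. extendsE E \<sigma> \<sigma>' \<and> extendsV V \<mu> \<mu>' \<longrightarrow>
        (\<exists>i\<in>W. i \<notin> I \<and> \<not> consistent E \<sigma>' \<mu>' i)) \<and>
     (\<forall>W'. W' \<subset> W \<longrightarrow>
        (\<exists>\<sigma>' \<mu>'. extendsE E \<sigma> \<sigma>' \<and> extendsV V \<mu> \<mu>' \<and>
           (\<forall>i\<in>W'. i \<notin> I \<longrightarrow> consistent E \<sigma>' \<mu>' i)))"

text \<open>A ground rule (H, B+, B-) stands for  h1;...;hl <- b1,...,bm, not c1,...,not cn.\<close>
type_synonym 'a rule = "'a set \<times> 'a set \<times> 'a set"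

definition reduct :: "'a rule set \<Rightarrow> 'a set \<Rightarrow> ('a set \<times> 'a set) set" where
  "reduct P X = {(H, Bp) | H Bp Bn. (H, Bp, Bn) \<in> P \<and> Bn \<inter> X = {}}"

definition is_model :: "('a set \<times> 'a set) set \<Rightarrow> 'a set \<Rightarrow> bool" where
  "is_model R X \<longleftrightarrow> (\<forall>(H, B) \<in> R. B \<subseteq> X \<longrightarrow> H \<inter> X \<noteq> {})"

definition answer_set :: "'a rule set \<Rightarrow> 'a set \<Rightarrow> bool" where
  "answer_set P X \<longleftrightarrow> is_model (reduct P X) X \<and> (\<forall>Y. Y \<subset> X \<longrightarrow> \<not> is_model (reduct P X) Y)"

datatype 'v cst = Vx 'v | CPlus | CMinus

fun sc :: "sign \<Rightarrow> 'v cst" where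
  "sc Pos = CPlus" | "sc Neg = CMinus"

datatype 'c atom =
    Vertex 'c | Edge 'c 'c | ObservedE 'c 'c 'c | ObservedV 'c 'c | Input 'c
  | LabelV 'c 'c | LabelE 'c 'c 'c | Active 'c | Inactive 'c
  | EdgeMIC 'c 'c | VertexMIC 'c | Opposite 'c 'c | Bottom
  | LabelV' 'c 'c 'c | LabelE' 'c 'c 'c 'c | Receive' 'c 'c 'c

text \<open>Ground instances of P_D over the set C of constants; F is the set of facts of the
  whole program (needed for the conditional literal opposite(U,V):edge(U,V)).\<close>
definition PD :: "'c set \<Rightarrow> 'c \<Rightarrow> 'c \<Rightarrow> 'c atom set \<Rightarrow> 'c atom rule set" where
  "PD C p m F =
     {({LabelV v s}, {ObservedV v s}, {}) | v s. v \<in> C \<and> s \<in> C}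
   \<union> {({LabelE u v s}, {ObservedE u v s}, {}) | u v s. u \<in> C \<and> v \<in> C \<and> s \<in> C}
   \<union> {({Active v, Inactive v}, {Vertex v}, {Input v}) | v. v \<in> C}
   \<union> {({EdgeMIC u v}, {Edge u v, Active v}, {}) | u v. u \<in> C \<and> v \<in> C}
   \<union> {({VertexMIC u}, {EdgeMIC u v}, {}) | u v. u \<in> C \<and> v \<in> C}
   \<union> {({VertexMIC v}, {Active v}, {}) | v. v \<in> C}
   \<union> {({LabelV v p, LabelV v m}, {VertexMIC v}, {}) | v. v \<in> C}
   \<union> {({LabelE u v p, LabelE u v m}, {EdgeMIC u v}, {}) | u v. u \<in> C \<and> v \<in> C}
   \<union> {({Opposite u v}, {LabelE u v m, LabelV u s, LabelV v s}, {}) | u v s.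
        u \<in> C \<and> v \<in> C \<and> s \<in> C}
   \<union> {({Opposite u v}, {LabelE u v p, LabelV u s, LabelV v t}, {}) | u v s t.
        u \<in> C \<and> v \<in> C \<and> s \<in> C \<and> t \<in> C \<and> s \<noteq> t}
   \<union> {({Bottom}, insert (Active v) {Opposite u v | u. Edge u v \<in> F}, {}) | v. v \<in> C}
   \<union> {({}, {}, {Bottom})}
   \<union> {({LabelV v p}, {Bottom, Vertex v}, {}) | v. v \<in> C}
   \<union> {({LabelV v m}, {Bottom, Vertex v}, {}) | v. v \<in> C}
   \<union> {({LabelE u v p}, {Bottom, Edge u v}, {}) | u v. u \<in> C \<and> v \<in> C}
   \<union> {({LabelE u v m}, {Bottom, Edge u v}, {}) | u v. u \<in> C \<and> v \<in> C}
   \<union> {({LabelV' w v p, LabelV' w v m}, {Active w, VertexMIC v}, {}) | w v. w \<in> C \<and> v \<in> C}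
   \<union> {({LabelE' w u v p, LabelE' w u v m}, {Active w, EdgeMIC u v}, {}) | w u v.
        w \<in> C \<and> u \<in> C \<and> v \<in> C}
   \<union> {({LabelV' w v s}, {Active w, ObservedV v s}, {}) | w v s. w \<in> C \<and> v \<in> C \<and> s \<in> C}
   \<union> {({LabelE' w u v s}, {Active w, ObservedE u v s}, {}) | w u v s.
        w \<in> C \<and> u \<in> C \<and> v \<in> C \<and> s \<in> C}
   \<union> {({Receive' w v p}, {LabelE' w u v s, LabelV' w u s}, {}) | w v u s.
        w \<in> C \<and> v \<in> C \<and> u \<in> C \<and> s \<in> C \<and> v \<noteq> w}
   \<union> {({Receive' w v m}, {LabelE' w u v s, LabelV' w u t}, {}) | w v u s t.
        w \<in> C \<and> v \<in> C \<and> u \<in> C \<and> s \<in> C \<and> t \<in> C \<and> v \<noteq> w \<and> s \<noteq> t}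
   \<union> {({}, {LabelV' w v s, Active v}, {Receive' w v s}) | w v s.
        w \<in> C \<and> v \<in> C \<and> s \<in> C \<and> v \<noteq> w}"

definition tau_facts ::
  "'v set \<Rightarrow> ('v \<times> 'v) set \<Rightarrow> ('v \<times> 'v \<Rightarrow> sign option) \<Rightarrow> 'v set \<Rightarrow> ('v \<Rightarrow> sign option)
   \<Rightarrow> 'v cst atom set" where
  "tau_facts V E \<sigma> I \<mu> =
     {Vertex (Vx i) | i. i \<in> V}
   \<union> {Edge (Vx j) (Vx i) | j i. (j, i) \<in> E}
   \<union> {ObservedE (Vx j) (Vx i) (sc s) | j i s. \<sigma> (j, i) = Some s}
   \<union> {ObservedV (Vx i) (sc s) | i s. \<mu> i = Some s}
   \<union> {Input (Vx i) | i. i \<in> I}"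

definition tau :: "'v set \<Rightarrow> ('v \<times> 'v) set \<Rightarrow> ('v \<times> 'v \<Rightarrow> sign option) \<Rightarrow> 'v set
   \<Rightarrow> ('v \<Rightarrow> sign option) \<Rightarrow> 'v cst atom rule set" where
  "tau V E \<sigma> I \<mu> = {({a}, {}, {}) | a. a \<in> tau_facts V E \<sigma> I \<mu>}"

definition consts_of :: "'v set \<Rightarrow> 'v cst set" where
  "consts_of V = Vx ` V \<union> {CPlus, CMinus}"

definition program :: "'v set \<Rightarrow> ('v \<times> 'v) set \<Rightarrow> ('v \<times> 'v \<Rightarrow> sign option) \<Rightarrow> 'v set
   \<Rightarrow> ('v \<Rightarrow> sign option) \<Rightarrow> 'v cst atom rule set" where
  "program V E \<sigma> I \<mu> =
     PD (consts_of V) CPlus CMinus (tau_facts V E \<sigma> I \<mu>) \<union> tau V E \<sigma> I \<mu>"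

end

theory Submission
  imports Defs
begin

lemma sc_inj[simp]: "(sc a = sc b) = (a = b)"
  by (cases a; cases b) auto
lemma sc_ne[simp]: "sc a \<noteq> Vx v" "Vx v \<noteq> sc a" by (cases a; auto)+
lemma sc_Pos: "sc Pos = CPlus" and sc_Neg: "sc Neg = CMinus" by auto
lemma smult_eq[simp]: "smult a a = Pos" by (cases a) auto
lemma smult_neq: "a \<noteq> b \<Longrightarrow> smult a b = Neg" by (cases a; cases b) auto
lemma smult_Neg: "smult a Neg \<noteq> a" by (cases a) auto
lemma sc_CPlus[simp]: "(sc a = CPlus) = (a = Pos)" by (cases a) auto
lemma sc_CMinus[simp]: "(sc a = CMinus) = (a = Neg)" by (cases a) auto
lemma CPlus_sc[simp]: "(CPlus = sc a) = (a = Pos)" by (cases a) auto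
lemma CMinus_sc[simp]: "(CMinus = sc a) = (a = Neg)" by (cases a) auto
lemma sign_nPos[simp]: "(a \<noteq> Pos) = (a = Neg)" by (cases a) auto
lemma sc_cases: "sc a = CPlus \<or> sc a = CMinus" by (cases a) auto

lemma ball_neq[simp]: "(\<forall>v\<in>A. x \<noteq> v) = (x \<notin> A)" by auto
lemma all_neq_E[simp]: "(\<forall>v. (x, v) \<in> E \<longrightarrow> y \<noteq> v) = ((x,y) \<notin> E)" by auto

locale mset =
  fixes V :: "'v set" and E :: "('v \<times> 'v) set" and \<sigma> :: "'v \<times> 'v \<Rightarrow> sign option"
    and I :: "'v set" and \<mu> :: "'v \<Rightarrow> sign option" and W :: "'v set"
  assumes ig: "influence_graph V E \<sigma> I"
    and vl: "vertex_labeling V \<mu>"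
    and mic: "is_MIC V E \<sigma> I \<mu> W"
begin

lemma W_sub: "W \<subseteq> V" using mic unfolding is_MIC_def by auto
lemma E_sub: "E \<subseteq> V \<times> V" using ig unfolding influence_graph_def by auto
lemma sig_E: "\<sigma> e \<noteq> None \<Longrightarrow> e \<in> E" using ig unfolding influence_graph_def by auto
lemma mu_V: "\<mu> i \<noteq> None \<Longrightarrow> i \<in> V" using vl unfolding vertex_labeling_def by auto

lemma mic1: "extendsE E \<sigma> s \<Longrightarrow> extendsV V \<mu> m \<Longrightarrow> \<exists>i\<in>W. i \<notin> I \<and> \<not> consistent E s m i"
  using mic unfolding is_MIC_def by blast
lemma mic2: "W' \<subset> W \<Longrightarrow> \<exists>s m. extendsE E \<sigma> s \<and> extendsV V \<mu> m \<and> (\<forall>i\<in>W'. i \<notin> I \<longrightarrow> consistent E s m i)"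
  using mic unfolding is_MIC_def by blast

lemma W_I: "i \<in> W \<Longrightarrow> i \<notin> I"
proof
  assume a: "i \<in> W" "i \<in> I"
  have "W - {i} \<subset> W" using a by auto
  then obtain s m where sm: "extendsE E \<sigma> s" "extendsV V \<mu> m"
     "\<forall>j\<in>W - {i}. j \<notin> I \<longrightarrow> consistent E s m j"
    using mic2 by blast
  then obtain j where "j \<in> W" "j \<notin> I" "\<not> consistent E s m j"
    using mic1 by blast
  then show False using sm a by auto
qed

definition wit where "wit w = (SOME p. extendsE E \<sigma> (fst p) \<and> extendsV V \<mu> (snd p) \<and>
   (\<forall>i\<in>W - {w}. i \<notin> I \<longrightarrow> consistent E (fst p) (snd p) i))"
definition "\<sigma>w w = fst (wit w)"
definition "\<mu>w w = snd (wit w)"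

lemma wit: assumes "w \<in> W"
  shows "extendsE E \<sigma> (\<sigma>w w) \<and> extendsV V \<mu> (\<mu>w w) \<and>
   (\<forall>i\<in>W - {w}. i \<notin> I \<longrightarrow> consistent E (\<sigma>w w) (\<mu>w w) i)"
proof -
  have "W - {w} \<subset> W" using assms by auto
  then obtain s m where sm: "extendsE E \<sigma> s" "extendsV V \<mu> m"
     "\<forall>j\<in>W - {w}. j \<notin> I \<longrightarrow> consistent E s m j"
    using mic2 by blast
  then have "\<exists>p. extendsE E \<sigma> (fst p) \<and> extendsV V \<mu> (snd p) \<and>
   (\<forall>i\<in>W - {w}. i \<notin> I \<longrightarrow> consistent E (fst p) (snd p) i)" by (intro exI[of _ "(s,m)"]) auto
  from someI_ex[OF this] show ?thesis unfolding wit_def \<sigma>w_def \<mu>w_def .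
qed

lemma muw_obs: "w \<in> W \<Longrightarrow> \<mu> v = Some s \<Longrightarrow> \<mu>w w v = s"
  using wit[of w] mu_V[of v] unfolding extendsV_def by auto
lemma sigw_obs: "w \<in> W \<Longrightarrow> \<sigma> e = Some s \<Longrightarrow> \<sigma>w w e = s"
  using wit[of w] sig_E[of e] unfolding extendsE_def by auto

lemma muw_obs': "w \<in> W \<Longrightarrow> \<mu> v \<noteq> None \<Longrightarrow> \<mu>w w v = the (\<mu> v)"
  using muw_obs by auto
lemma sigw_obs': "w \<in> W \<Longrightarrow> \<sigma> e \<noteq> None \<Longrightarrow> \<sigma>w w e = the (\<sigma> e)"
  using sigw_obs by auto

definition "M = W \<union> {u. \<exists>v\<in>W. (u,v) \<in> E}"
definition "EM e \<longleftrightarrow> (e \<in> E \<and> snd e \<in> W) \<or> \<sigma> e \<noteq> None"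
definition "MV v \<longleftrightarrow> v \<in> M \<or> \<mu> v \<noteq> None"

definition X :: "'v cst atom set" where
"X = tau_facts V E \<sigma> I \<mu>
 \<union> {Active (Vx i) | i. i \<in> W}
 \<union> {Inactive (Vx i) | i. i \<in> V - I - W}
 \<union> {EdgeMIC (Vx u) (Vx v) | u v. (u,v) \<in> E \<and> v \<in> W}
 \<union> {VertexMIC (Vx u) | u. u \<in> M}
 \<union> {Bottom}
 \<union> {LabelV (Vx v) s | v s. v \<in> V \<and> (s = CPlus \<or> s = CMinus)}
 \<union> {LabelE (Vx u) (Vx v) s | u v s. (u,v) \<in> E \<and> (s = CPlus \<or> s = CMinus)}
 \<union> {Opposite (Vx u) (Vx v) | u v. (u,v)\<in>E}
 \<union> {LabelV' (Vx w) (Vx v) (sc (\<mu>w w v)) | w v. w \<in> W \<and> MV v}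
 \<union> {LabelE' (Vx w) (Vx u) (Vx v) (sc (\<sigma>w w (u,v))) | w u v. w \<in> W \<and> EM (u,v)}
 \<union> {Receive' (Vx w) (Vx v) (sc (smult (\<mu>w w u) (\<sigma>w w (u,v)))) | w u v.
      w\<in>W \<and> v \<noteq> w \<and> EM (u,v) \<and> MV u}"

lemma X_simps:
  "Vertex c \<in> X \<longleftrightarrow> (\<exists>i\<in>V. c = Vx i)"
  "Edge a b \<in> X \<longleftrightarrow> (\<exists>j i. (j,i)\<in>E \<and> a = Vx j \<and> b = Vx i)"
  "ObservedE a b c \<in> X \<longleftrightarrow> (\<exists>j i s. \<sigma> (j,i) = Some s \<and> a = Vx j \<and> b = Vx i \<and> c = sc s)"
  "ObservedV a c \<in> X \<longleftrightarrow> (\<exists>i s. \<mu> i = Some s \<and> a = Vx i \<and> c = sc s)"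
  "Input c \<in> X \<longleftrightarrow> (\<exists>i\<in>I. c = Vx i)"
  "Active c \<in> X \<longleftrightarrow> (\<exists>i\<in>W. c = Vx i)"
  "Inactive c \<in> X \<longleftrightarrow> (\<exists>i\<in>V - I - W. c = Vx i)"
  "EdgeMIC a b \<in> X \<longleftrightarrow> (\<exists>u v. (u,v)\<in>E \<and> v \<in> W \<and> a = Vx u \<and> b = Vx v)"
  "VertexMIC c \<in> X \<longleftrightarrow> (\<exists>i\<in>M. c = Vx i)"
  "Bottom \<in> X"
  "LabelV a s \<in> X \<longleftrightarrow> (\<exists>v\<in>V. a = Vx v) \<and> (s = CPlus \<or> s = CMinus)"
  "LabelE a b s \<in> X \<longleftrightarrow> (\<exists>u v. (u,v)\<in>E \<and> a = Vx u \<and> b = Vx v) \<and> (s = CPlus \<or> s = CMinus)"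
  "Opposite a b \<in> X \<longleftrightarrow> (\<exists>u v. (u,v)\<in>E \<and> a = Vx u \<and> b = Vx v)"
  "LabelV' a b s \<in> X \<longleftrightarrow> (\<exists>w v. w \<in> W \<and> MV v \<and> a = Vx w \<and> b = Vx v \<and> s = sc (\<mu>w w v))"
  "LabelE' a b c s \<in> X \<longleftrightarrow> (\<exists>w u v. w \<in> W \<and> EM (u,v) \<and> a = Vx w \<and> b = Vx u \<and> c = Vx v
      \<and> s = sc (\<sigma>w w (u,v)))"
  "Receive' a b s \<in> X \<longleftrightarrow> (\<exists>w u v. w\<in>W \<and> v \<noteq> w \<and> EM (u,v) \<and> MV u \<and> a = Vx w \<and> b = Vx v
      \<and> s = sc (smult (\<mu>w w u) (\<sigma>w w (u,v))))"
  unfolding X_def tau_facts_def by auto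

lemma sig_E': "\<sigma> e = Some s \<Longrightarrow> e \<in> E" using sig_E by auto
lemma mu_V': "\<mu> i = Some s \<Longrightarrow> i \<in> V" using mu_V by auto
lemma E_V: "(u,v) \<in> E \<Longrightarrow> u \<in> V \<and> v \<in> V" using E_sub by auto
lemma W_V: "i \<in> W \<Longrightarrow> i \<in> V" using W_sub by auto
lemma M_I1: "(x,v)\<in>E \<Longrightarrow> v\<in>W \<Longrightarrow> x\<in>M" unfolding M_def by auto
lemma M_I2: "v\<in>W \<Longrightarrow> v\<in>M" unfolding M_def by auto
lemma MV_I1[simp]: "v\<in>M \<Longrightarrow> MV v" unfolding MV_def by auto
lemma MV_I2[simp]: "\<mu> v \<noteq> None \<Longrightarrow> MV v" unfolding MV_def by auto
lemma EM_I1[simp]: "(u,v)\<in>E \<Longrightarrow> v\<in>W \<Longrightarrow> EM (u,v)" unfolding EM_def by auto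
lemma EM_I2[simp]: "\<sigma> e \<noteq> None \<Longrightarrow> EM e" unfolding EM_def by auto
lemma tauX: "a \<in> tau_facts V E \<sigma> I \<mu> \<Longrightarrow> a \<in> X" unfolding X_def by auto
lemma M_V: "u \<in> M \<Longrightarrow> u \<in> V" using W_sub E_sub unfolding M_def by auto

lemma recv: assumes "w\<in>W" "v\<in>W" "v\<noteq>w"
  shows "Receive' (Vx w) (Vx v) (sc (\<mu>w w v)) \<in> X"
proof -
  have "v \<notin> I" using W_I assms by auto
  then obtain j where j: "(j,v)\<in>E" "\<mu>w w v = smult (\<mu>w w j) (\<sigma>w w (j,v))"
    using wit[OF assms(1)] assms unfolding consistent_def by blast
  have "EM (j,v)" using j assms unfolding EM_def by auto
  moreover have "MV j" using j assms unfolding MV_def M_def by auto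
  ultimately show ?thesis unfolding X_simps using j assms
    by (intro exI[of _ w] exI[of _ j] exI[of _ v]) auto
qed

lemma r21: assumes "LabelE' w u v s \<in> X" "LabelV' w u s \<in> X" "v \<noteq> w"
  shows "Receive' w v CPlus \<in> X"
proof -
  obtain w' u' v' where a: "w' \<in> W" "EM (u',v')" "w = Vx w'" "u = Vx u'" "v = Vx v'"
    "s = sc (\<sigma>w w' (u',v'))" using assms(1) unfolding X_simps by blast
  obtain w'' u'' where b: "w'' \<in> W" "MV u''" "w = Vx w''" "u = Vx u''" "s = sc (\<mu>w w'' u'')"
    using assms(2) unfolding X_simps by blast
  have "w'' = w'" "u'' = u'" using a b by auto
  then have "\<mu>w w' u' = \<sigma>w w' (u',v')" using a b by simp
  then show ?thesis unfolding X_simps using a b assms(3)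
    by (intro exI[of _ w'] exI[of _ u'] exI[of _ v']) auto
qed

lemma r22: assumes "LabelE' w u v s \<in> X" "LabelV' w u t \<in> X" "v \<noteq> w" "s \<noteq> t"
  shows "Receive' w v CMinus \<in> X"
proof -
  obtain w' u' v' where a: "w' \<in> W" "EM (u',v')" "w = Vx w'" "u = Vx u'" "v = Vx v'"
    "s = sc (\<sigma>w w' (u',v'))" using assms(1) unfolding X_simps by blast
  obtain w'' u'' where b: "w'' \<in> W" "MV u''" "w = Vx w''" "u = Vx u''" "t = sc (\<mu>w w'' u'')"
    using assms(2) unfolding X_simps by blast
  have "w'' = w'" "u'' = u'" using a b by auto
  then have "\<mu>w w' u' \<noteq> \<sigma>w w' (u',v')" using a b assms(4) by auto
  then have "smult (\<mu>w w' u') (\<sigma>w w' (u',v')) = Neg" by (rule smult_neq)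
  then show ?thesis unfolding X_simps using a b assms(3)
    by (intro exI[of _ w'] exI[of _ u'] exI[of _ v']) auto
qed

lemma r23: assumes "LabelV' w v s \<in> X" "Active v \<in> X" "v \<noteq> w"
  shows "Receive' w v s \<in> X"
proof -
  obtain w' v' where a: "w' \<in> W" "w = Vx w'" "v = Vx v'" "s = sc (\<mu>w w' v')"
    using assms(1) unfolding X_simps by blast
  have "v' \<in> W" using assms(2) a unfolding X_simps by auto
  then show ?thesis using recv[of w' v'] a assms(3) by auto
qed

lemma model_rules: "(H,Bp,Bn) \<in> program V E \<sigma> I \<mu> \<Longrightarrow> Bn \<inter> X = {} \<Longrightarrow> Bp \<subseteq> X \<Longrightarrow> H \<inter> X \<noteq> {}"
  unfolding program_def PD_def tau_def consts_of_def
  apply (elim UnE)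
  subgoal apply (clarsimp simp: X_simps M_V W_V mu_V sig_E muw_obs' sigw_obs' tauX) apply (blast intro: M_I1 M_I2)? done
  subgoal apply (clarsimp simp: X_simps M_V W_V mu_V sig_E muw_obs' sigw_obs' tauX) apply (blast intro: M_I1 M_I2)? done
  subgoal apply (clarsimp simp: X_simps M_V W_V mu_V sig_E muw_obs' sigw_obs' tauX) apply (blast intro: M_I1 M_I2)? done
  subgoal apply (clarsimp simp: X_simps M_V W_V mu_V sig_E muw_obs' sigw_obs' tauX) apply (blast intro: M_I1 M_I2)? done
  subgoal apply (clarsimp simp: X_simps M_V W_V mu_V sig_E muw_obs' sigw_obs' tauX) apply (blast intro: M_I1 M_I2)? done
  subgoal apply (clarsimp simp: X_simps M_V W_V mu_V sig_E muw_obs' sigw_obs' tauX) apply (blast intro: M_I1 M_I2)? done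
  subgoal apply (clarsimp simp: X_simps M_V W_V mu_V sig_E muw_obs' sigw_obs' tauX) apply (blast intro: M_I1 M_I2)? done
  subgoal apply (clarsimp simp: X_simps M_V W_V mu_V sig_E muw_obs' sigw_obs' tauX) apply (blast intro: M_I1 M_I2)? done
  subgoal apply (clarsimp simp: X_simps M_V W_V mu_V sig_E muw_obs' sigw_obs' tauX) apply (blast intro: M_I1 M_I2)? done
  subgoal apply (clarsimp simp: X_simps M_V W_V mu_V sig_E muw_obs' sigw_obs' tauX) apply (blast intro: M_I1 M_I2)? done
  subgoal apply (clarsimp simp: X_simps M_V W_V mu_V sig_E muw_obs' sigw_obs' tauX) apply (blast intro: M_I1 M_I2)? done
  subgoal apply (clarsimp simp: X_simps M_V W_V mu_V sig_E muw_obs' sigw_obs' tauX) apply (blast intro: M_I1 M_I2)? done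
  subgoal apply (clarsimp simp: X_simps M_V W_V mu_V sig_E muw_obs' sigw_obs' tauX) apply (blast intro: M_I1 M_I2)? done
  subgoal apply (clarsimp simp: X_simps M_V W_V mu_V sig_E muw_obs' sigw_obs' tauX) apply (blast intro: M_I1 M_I2)? done
  subgoal apply (clarsimp simp: X_simps M_V W_V mu_V sig_E muw_obs' sigw_obs' tauX) apply (blast intro: M_I1 M_I2)? done
  subgoal apply (clarsimp simp: X_simps M_V W_V mu_V sig_E muw_obs' sigw_obs' tauX) apply (blast intro: M_I1 M_I2)? done
  subgoal apply (clarsimp simp: X_simps M_V W_V mu_V sig_E muw_obs' sigw_obs' tauX) apply (blast intro: M_I1 M_I2)? done
  subgoal apply (clarsimp simp: X_simps M_V W_V mu_V sig_E muw_obs' sigw_obs' tauX) apply (blast intro: M_I1 M_I2)? done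
  subgoal apply (clarsimp simp: X_simps M_V W_V mu_V sig_E muw_obs' sigw_obs' tauX) apply (blast intro: M_I1 M_I2)? done
  subgoal apply (clarsimp simp: X_simps M_V W_V mu_V sig_E muw_obs' sigw_obs' tauX) apply (blast intro: M_I1 M_I2)? done
  subgoal by clarsimp (blast intro: r21)
  subgoal by clarsimp (blast intro: r22)
  subgoal by clarsimp (blast intro: r23)
  subgoal apply (clarsimp simp: X_simps M_V W_V mu_V sig_E muw_obs' sigw_obs' tauX) apply (blast intro: M_I1 M_I2)? done
  done

abbreviation "C \<equiv> consts_of V"
abbreviation "P \<equiv> program V E \<sigma> I \<mu>"

lemma CV[simp]: "i \<in> V \<Longrightarrow> Vx i \<in> C" "CPlus \<in> C" "CMinus \<in> C" "sc s \<in> C"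
  unfolding consts_of_def by (auto intro: sc.induct[of "\<lambda>s. sc s \<in> {CPlus, CMinus}"])

lemma P1: "v \<in> C \<Longrightarrow> s \<in> C \<Longrightarrow> ({LabelV v s},{ObservedV v s},{}) \<in> P"
  unfolding program_def PD_def Un_iff mem_Collect_eq
  apply (rule disjI1, rule disjI1, rule disjI1, rule disjI1, rule disjI1, rule disjI1, rule disjI1, rule disjI1, rule disjI1, rule disjI1, rule disjI1, rule disjI1, rule disjI1, rule disjI1, rule disjI1, rule disjI1, rule disjI1, rule disjI1, rule disjI1, rule disjI1, rule disjI1, rule disjI1, rule disjI1)
  by blast
lemma P2: "u \<in> C \<Longrightarrow> v \<in> C \<Longrightarrow> s \<in> C \<Longrightarrow> ({LabelE u v s},{ObservedE u v s},{}) \<in> P"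
  unfolding program_def PD_def Un_iff mem_Collect_eq
  apply (rule disjI1, rule disjI1, rule disjI1, rule disjI1, rule disjI1, rule disjI1, rule disjI1, rule disjI1, rule disjI1, rule disjI1, rule disjI1, rule disjI1, rule disjI1, rule disjI1, rule disjI1, rule disjI1, rule disjI1, rule disjI1, rule disjI1, rule disjI1, rule disjI1, rule disjI1, rule disjI2)
  by blast
lemma P3: "v \<in> C \<Longrightarrow> ({Active v, Inactive v},{Vertex v},{Input v}) \<in> P"
  unfolding program_def PD_def Un_iff mem_Collect_eq
  apply (rule disjI1, rule disjI1, rule disjI1, rule disjI1, rule disjI1, rule disjI1, rule disjI1, rule disjI1, rule disjI1, rule disjI1, rule disjI1, rule disjI1, rule disjI1, rule disjI1, rule disjI1, rule disjI1, rule disjI1, rule disjI1, rule disjI1, rule disjI1, rule disjI1, rule disjI2)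
  by blast
lemma P4: "u \<in> C \<Longrightarrow> v \<in> C \<Longrightarrow> ({EdgeMIC u v},{Edge u v, Active v},{}) \<in> P"
  unfolding program_def PD_def Un_iff mem_Collect_eq
  apply (rule disjI1, rule disjI1, rule disjI1, rule disjI1, rule disjI1, rule disjI1, rule disjI1, rule disjI1, rule disjI1, rule disjI1, rule disjI1, rule disjI1, rule disjI1, rule disjI1, rule disjI1, rule disjI1, rule disjI1, rule disjI1, rule disjI1, rule disjI1, rule disjI2)
  by blast
lemma P5: "u \<in> C \<Longrightarrow> v \<in> C \<Longrightarrow> ({VertexMIC u},{EdgeMIC u v},{}) \<in> P"
  unfolding program_def PD_def Un_iff mem_Collect_eq
  apply (rule disjI1, rule disjI1, rule disjI1, rule disjI1, rule disjI1, rule disjI1, rule disjI1, rule disjI1, rule disjI1, rule disjI1, rule disjI1, rule disjI1, rule disjI1, rule disjI1, rule disjI1, rule disjI1, rule disjI1, rule disjI1, rule disjI1, rule disjI2)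
  by blast
lemma P6: "v \<in> C \<Longrightarrow> ({VertexMIC v},{Active v},{}) \<in> P"
  unfolding program_def PD_def Un_iff mem_Collect_eq
  apply (rule disjI1, rule disjI1, rule disjI1, rule disjI1, rule disjI1, rule disjI1, rule disjI1, rule disjI1, rule disjI1, rule disjI1, rule disjI1, rule disjI1, rule disjI1, rule disjI1, rule disjI1, rule disjI1, rule disjI1, rule disjI1, rule disjI2)
  by blast
lemma P7: "v \<in> C \<Longrightarrow> ({LabelV v CPlus, LabelV v CMinus},{VertexMIC v},{}) \<in> P"
  unfolding program_def PD_def Un_iff mem_Collect_eq
  apply (rule disjI1, rule disjI1, rule disjI1, rule disjI1, rule disjI1, rule disjI1, rule disjI1, rule disjI1, rule disjI1, rule disjI1, rule disjI1, rule disjI1, rule disjI1, rule disjI1, rule disjI1, rule disjI1, rule disjI1, rule disjI2)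
  by blast
lemma P8: "u \<in> C \<Longrightarrow> v \<in> C \<Longrightarrow> ({LabelE u v CPlus, LabelE u v CMinus},{EdgeMIC u v},{}) \<in> P"
  unfolding program_def PD_def Un_iff mem_Collect_eq
  apply (rule disjI1, rule disjI1, rule disjI1, rule disjI1, rule disjI1, rule disjI1, rule disjI1, rule disjI1, rule disjI1, rule disjI1, rule disjI1, rule disjI1, rule disjI1, rule disjI1, rule disjI1, rule disjI1, rule disjI2)
  by blast
lemma P9: "u \<in> C \<Longrightarrow> v \<in> C \<Longrightarrow> s \<in> C \<Longrightarrow>
  ({Opposite u v},{LabelE u v CMinus, LabelV u s, LabelV v s},{}) \<in> P"
  unfolding program_def PD_def Un_iff mem_Collect_eq
  apply (rule disjI1, rule disjI1, rule disjI1, rule disjI1, rule disjI1, rule disjI1, rule disjI1, rule disjI1, rule disjI1, rule disjI1, rule disjI1, rule disjI1, rule disjI1, rule disjI1, rule disjI1, rule disjI2)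
  by blast
lemma P10: "u \<in> C \<Longrightarrow> v \<in> C \<Longrightarrow> s \<in> C \<Longrightarrow> t \<in> C \<Longrightarrow> s \<noteq> t \<Longrightarrow>
  ({Opposite u v},{LabelE u v CPlus, LabelV u s, LabelV v t},{}) \<in> P"
  unfolding program_def PD_def Un_iff mem_Collect_eq
  apply (rule disjI1, rule disjI1, rule disjI1, rule disjI1, rule disjI1, rule disjI1, rule disjI1, rule disjI1, rule disjI1, rule disjI1, rule disjI1, rule disjI1, rule disjI1, rule disjI1, rule disjI2)
  by blast
lemma P11: "v \<in> C \<Longrightarrow>
  ({Bottom}, insert (Active v) {Opposite u v | u. Edge u v \<in> tau_facts V E \<sigma> I \<mu>}, {}) \<in> P"
  unfolding program_def PD_def Un_iff mem_Collect_eq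
  apply (rule disjI1, rule disjI1, rule disjI1, rule disjI1, rule disjI1, rule disjI1, rule disjI1, rule disjI1, rule disjI1, rule disjI1, rule disjI1, rule disjI1, rule disjI1, rule disjI2)
  by blast
lemma P13: "v \<in> C \<Longrightarrow> ({LabelV v CPlus},{Bottom, Vertex v},{}) \<in> P"
  unfolding program_def PD_def Un_iff mem_Collect_eq
  apply (rule disjI1, rule disjI1, rule disjI1, rule disjI1, rule disjI1, rule disjI1, rule disjI1, rule disjI1, rule disjI1, rule disjI1, rule disjI1, rule disjI2)
  by blast
lemma P14: "v \<in> C \<Longrightarrow> ({LabelV v CMinus},{Bottom, Vertex v},{}) \<in> P"
  unfolding program_def PD_def Un_iff mem_Collect_eq
  apply (rule disjI1, rule disjI1, rule disjI1, rule disjI1, rule disjI1, rule disjI1, rule disjI1, rule disjI1, rule disjI1, rule disjI1, rule disjI2)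
  by blast
lemma P15: "u \<in> C \<Longrightarrow> v \<in> C \<Longrightarrow> ({LabelE u v CPlus},{Bottom, Edge u v},{}) \<in> P"
  unfolding program_def PD_def Un_iff mem_Collect_eq
  apply (rule disjI1, rule disjI1, rule disjI1, rule disjI1, rule disjI1, rule disjI1, rule disjI1, rule disjI1, rule disjI1, rule disjI2)
  by blast
lemma P16: "u \<in> C \<Longrightarrow> v \<in> C \<Longrightarrow> ({LabelE u v CMinus},{Bottom, Edge u v},{}) \<in> P"
  unfolding program_def PD_def Un_iff mem_Collect_eq
  apply (rule disjI1, rule disjI1, rule disjI1, rule disjI1, rule disjI1, rule disjI1, rule disjI1, rule disjI1, rule disjI2)
  by blast
lemma P17: "w \<in> C \<Longrightarrow> v \<in> C \<Longrightarrow>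
  ({LabelV' w v CPlus, LabelV' w v CMinus},{Active w, VertexMIC v},{}) \<in> P"
  unfolding program_def PD_def Un_iff mem_Collect_eq
  apply (rule disjI1, rule disjI1, rule disjI1, rule disjI1, rule disjI1, rule disjI1, rule disjI1, rule disjI2)
  by blast
lemma P18: "w \<in> C \<Longrightarrow> u \<in> C \<Longrightarrow> v \<in> C \<Longrightarrow>
  ({LabelE' w u v CPlus, LabelE' w u v CMinus},{Active w, EdgeMIC u v},{}) \<in> P"
  unfolding program_def PD_def Un_iff mem_Collect_eq
  apply (rule disjI1, rule disjI1, rule disjI1, rule disjI1, rule disjI1, rule disjI1, rule disjI2)
  by blast
lemma P19: "w \<in> C \<Longrightarrow> v \<in> C \<Longrightarrow> s \<in> C \<Longrightarrow>
  ({LabelV' w v s},{Active w, ObservedV v s},{}) \<in> P"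
  unfolding program_def PD_def Un_iff mem_Collect_eq
  apply (rule disjI1, rule disjI1, rule disjI1, rule disjI1, rule disjI1, rule disjI2)
  by blast
lemma P20: "w \<in> C \<Longrightarrow> u \<in> C \<Longrightarrow> v \<in> C \<Longrightarrow> s \<in> C \<Longrightarrow>
  ({LabelE' w u v s},{Active w, ObservedE u v s},{}) \<in> P"
  unfolding program_def PD_def Un_iff mem_Collect_eq
  apply (rule disjI1, rule disjI1, rule disjI1, rule disjI1, rule disjI2)
  by blast
lemma P21: "w \<in> C \<Longrightarrow> u \<in> C \<Longrightarrow> v \<in> C \<Longrightarrow> s \<in> C \<Longrightarrow> v \<noteq> w \<Longrightarrow>
  ({Receive' w v CPlus},{LabelE' w u v s, LabelV' w u s},{}) \<in> P"
  unfolding program_def PD_def Un_iff mem_Collect_eq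
  apply (rule disjI1, rule disjI1, rule disjI1, rule disjI2)
  by blast
lemma P22: "w \<in> C \<Longrightarrow> u \<in> C \<Longrightarrow> v \<in> C \<Longrightarrow> s \<in> C \<Longrightarrow> t \<in> C \<Longrightarrow> v \<noteq> w \<Longrightarrow> s \<noteq> t \<Longrightarrow>
  ({Receive' w v CMinus},{LabelE' w u v s, LabelV' w u t},{}) \<in> P"
  unfolding program_def PD_def Un_iff mem_Collect_eq
  apply (rule disjI1, rule disjI1, rule disjI2)
  by blast
lemma Ptau: "a \<in> tau_facts V E \<sigma> I \<mu> \<Longrightarrow> ({a},{},{}) \<in> P"
  unfolding program_def tau_def by blast

lemma smult_Pos: "smult a Pos = a" by (cases a) auto
lemma smult_Neg': "smult a Neg = (if a = Pos then Neg else Pos)" by (cases a) auto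

lemma tau_Edge: "Edge a b \<in> tau_facts V E \<sigma> I \<mu> \<longleftrightarrow> (\<exists>j i. (j,i)\<in>E \<and> a = Vx j \<and> b = Vx i)"
  unfolding tau_facts_def by auto
lemma tau_simps:
  "i \<in> V \<Longrightarrow> Vertex (Vx i) \<in> tau_facts V E \<sigma> I \<mu>"
  "(j,i)\<in>E \<Longrightarrow> Edge (Vx j) (Vx i) \<in> tau_facts V E \<sigma> I \<mu>"
  "\<sigma> (j,i) = Some s \<Longrightarrow> ObservedE (Vx j) (Vx i) (sc s) \<in> tau_facts V E \<sigma> I \<mu>"
  "\<mu> i = Some s \<Longrightarrow> ObservedV (Vx i) (sc s) \<in> tau_facts V E \<sigma> I \<mu>"
  unfolding tau_facts_def by auto

context
  fixes Y assumes ym: "is_model (reduct P X) Y" and ysub: "Y \<subseteq> X"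
begin

lemma app: assumes "(H,Bp,Bn) \<in> P" "Bn \<inter> X = {}" "Bp \<subseteq> Y" shows "\<exists>a\<in>H. a \<in> Y"
proof -
  have "(H,Bp) \<in> reduct P X" unfolding reduct_def using assms(1,2) by blast
  then have "H \<inter> Y \<noteq> {}" using ym assms(3) unfolding is_model_def by fastforce
  then show ?thesis by auto
qed

lemma Ytau: "a \<in> tau_facts V E \<sigma> I \<mu> \<Longrightarrow> a \<in> Y"
  using app[OF Ptau] by auto

lemma Yt:
  "i \<in> V \<Longrightarrow> Vertex (Vx i) \<in> Y"
  "(j,i)\<in>E \<Longrightarrow> Edge (Vx j) (Vx i) \<in> Y"
  "\<sigma> (j,i) = Some s \<Longrightarrow> ObservedE (Vx j) (Vx i) (sc s) \<in> Y"
  "\<mu> i = Some s \<Longrightarrow> ObservedV (Vx i) (sc s) \<in> Y"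
  using tau_simps Ytau by auto

lemma YX: "a \<in> Y \<Longrightarrow> a \<in> X" using ysub by auto

lemma Y_Active: assumes "i \<in> W" shows "Active (Vx i) \<in> Y"
proof -
  have i: "i \<in> V" "i \<notin> I" using assms W_V W_I by auto
  have "Input (Vx i) \<notin> X" using i unfolding X_simps by auto
  then have "\<exists>a\<in>{Active (Vx i), Inactive (Vx i)}. a \<in> Y"
    using app[OF P3[of "Vx i"]] i Yt(1)[of i] by auto
  moreover have "Inactive (Vx i) \<notin> Y" using YX[of "Inactive (Vx i)"] assms unfolding X_simps by auto
  ultimately show ?thesis by auto
qed

lemma Y_Inactive: assumes "i \<in> V - I - W" shows "Inactive (Vx i) \<in> Y"
proof -
  have i: "i \<in> V" "i \<notin> I" using assms by auto
  have "Input (Vx i) \<notin> X" using i unfolding X_simps by auto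
  then have "\<exists>a\<in>{Active (Vx i), Inactive (Vx i)}. a \<in> Y"
    using app[OF P3[of "Vx i"]] i Yt(1)[of i] by auto
  moreover have "Active (Vx i) \<notin> Y" using YX[of "Active (Vx i)"] assms unfolding X_simps by auto
  ultimately show ?thesis by auto
qed

lemma Y_EdgeMIC: assumes "(u,v) \<in> E" "v \<in> W" shows "EdgeMIC (Vx u) (Vx v) \<in> Y"
  using app[OF P4[of "Vx u" "Vx v"]] assms E_V[OF assms(1)] Yt(2)[OF assms(1)] Y_Active[OF assms(2)]
  by auto

lemma Y_VMIC: assumes "u \<in> M" shows "VertexMIC (Vx u) \<in> Y"
proof (cases "u \<in> W")
  case True
  then show ?thesis using app[OF P6[of "Vx u"]] W_V Y_Active by auto
next
  case False
  then obtain v where v: "(u,v) \<in> E" "v \<in> W" using assms unfolding M_def by auto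
  then show ?thesis using app[OF P5[of "Vx u" "Vx v"]] E_V[OF v(1)] Y_EdgeMIC[OF v] by auto
qed

lemma Y_LV': assumes "w \<in> W" "MV v" shows "LabelV' (Vx w) (Vx v) (sc (\<mu>w w v)) \<in> Y"
proof (cases "\<mu> v = None")
  case True
  then have vM: "v \<in> M" using assms unfolding MV_def by auto
  have "\<exists>a\<in>{LabelV' (Vx w) (Vx v) CPlus, LabelV' (Vx w) (Vx v) CMinus}. a \<in> Y"
    using app[OF P17[of "Vx w" "Vx v"]] W_V[OF assms(1)] M_V[OF vM] Y_Active[OF assms(1)] Y_VMIC[OF vM]
    by auto
  then obtain c where c: "c \<in> {CPlus, CMinus}" "LabelV' (Vx w) (Vx v) c \<in> Y" by auto
  then have "c = sc (\<mu>w w v)" using YX[OF c(2)] unfolding X_simps by auto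
  then show ?thesis using c by simp
next
  case False
  then obtain s where s: "\<mu> v = Some s" by auto
  have "LabelV' (Vx w) (Vx v) (sc s) \<in> Y"
    using app[OF P19[of "Vx w" "Vx v" "sc s"]] W_V[OF assms(1)] mu_V'[OF s] Y_Active[OF assms(1)] Yt(4)[OF s]
    by auto
  then show ?thesis using muw_obs[OF assms(1) s] by simp
qed

lemma Y_LE': assumes "w \<in> W" "EM (u,v)" shows "LabelE' (Vx w) (Vx u) (Vx v) (sc (\<sigma>w w (u,v))) \<in> Y"
proof (cases "\<sigma> (u,v) = None")
  case True
  then have e: "(u,v) \<in> E" "v \<in> W" using assms unfolding EM_def by auto
  have "\<exists>a\<in>{LabelE' (Vx w) (Vx u) (Vx v) CPlus, LabelE' (Vx w) (Vx u) (Vx v) CMinus}. a \<in> Y"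
    using app[OF P18[of "Vx w" "Vx u" "Vx v"]] W_V[OF assms(1)] E_V[OF e(1)] Y_Active[OF assms(1)]
      Y_EdgeMIC[OF e] by auto
  then obtain c where c: "c \<in> {CPlus, CMinus}" "LabelE' (Vx w) (Vx u) (Vx v) c \<in> Y" by auto
  then have "c = sc (\<sigma>w w (u,v))" using YX[OF c(2)] unfolding X_simps by auto
  then show ?thesis using c by simp
next
  case False
  then obtain s where s: "\<sigma> (u,v) = Some s" by auto
  have uv: "u \<in> V" "v \<in> V" using E_V[OF sig_E'[OF s]] by auto
  have "LabelE' (Vx w) (Vx u) (Vx v) (sc s) \<in> Y"
    using app[OF P20[of "Vx w" "Vx u" "Vx v" "sc s"]] W_V[OF assms(1)] uv Y_Active[OF assms(1)] Yt(3)[OF s]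
    by auto
  then show ?thesis using sigw_obs[OF assms(1) s] by simp
qed

lemma MV_V: "MV v \<Longrightarrow> v \<in> V" unfolding MV_def using M_V mu_V by auto
lemma EM_V: "EM (u,v) \<Longrightarrow> u \<in> V \<and> v \<in> V" unfolding EM_def using E_V sig_E by (metis fst_conv snd_conv)

lemma Y_Recv: assumes "w\<in>W" "v \<noteq> w" "EM (u,v)" "MV u"
  shows "Receive' (Vx w) (Vx v) (sc (smult (\<mu>w w u) (\<sigma>w w (u,v)))) \<in> Y"
proof -
  have a: "LabelE' (Vx w) (Vx u) (Vx v) (sc (\<sigma>w w (u,v))) \<in> Y" "LabelV' (Vx w) (Vx u) (sc (\<mu>w w u)) \<in> Y"
    using Y_LE' Y_LV' assms by auto
  have V: "w \<in> V" "u \<in> V" "v \<in> V" using W_V assms EM_V by auto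
  show ?thesis
  proof (cases "\<mu>w w u = \<sigma>w w (u,v)")
    case True
    then show ?thesis using app[OF P21[of "Vx w" "Vx u" "Vx v" "sc (\<sigma>w w (u,v))"]] a V assms(2) by auto
  next
    case False
    then show ?thesis using app[OF P22[of "Vx w" "Vx u" "Vx v" "sc (\<sigma>w w (u,v))" "sc (\<mu>w w u)"]] a V assms(2)
      smult_neq[OF False] by auto
  qed
qed

lemma Y_Bottom: "Bottom \<in> Y"
proof -
  define \<mu>' where "\<mu>' i = (case \<mu> i of Some s \<Rightarrow> s | None \<Rightarrow> if LabelV (Vx i) CPlus \<in> Y then Pos else Neg)" for i
  define \<sigma>' where "\<sigma>' e = (case \<sigma> e of Some s \<Rightarrow> s
     | None \<Rightarrow> if LabelE (Vx (fst e)) (Vx (snd e)) CPlus \<in> Y then Pos else Neg)" for e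
  have ee: "extendsE E \<sigma> \<sigma>'" unfolding extendsE_def \<sigma>'_def by auto
  have ev: "extendsV V \<mu> \<mu>'" unfolding extendsV_def \<mu>'_def by auto
  obtain i where i: "i\<in>W" "i\<notin>I" "\<not> consistent E \<sigma>' \<mu>' i" using mic1[OF ee ev] by blast
  have LV: "LabelV (Vx u) (sc (\<mu>' u)) \<in> Y" if u: "u \<in> M" for u
  proof (cases "\<mu> u")
    case None
    have "\<exists>a\<in>{LabelV (Vx u) CPlus, LabelV (Vx u) CMinus}. a \<in> Y"
      using app[OF P7[of "Vx u"]] M_V[OF u] Y_VMIC[OF u] by auto
    then show ?thesis using None unfolding \<mu>'_def by auto
  next
    case (Some s)
    then show ?thesis using app[OF P1[of "Vx u" "sc s"]] M_V[OF u] Yt(4)[OF Some] unfolding \<mu>'_def by auto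
  qed
  have LE: "LabelE (Vx u) (Vx v) (sc (\<sigma>' (u,v))) \<in> Y" if e: "(u,v) \<in> E" "v \<in> W" for u v
  proof (cases "\<sigma> (u,v)")
    case None
    have "\<exists>a\<in>{LabelE (Vx u) (Vx v) CPlus, LabelE (Vx u) (Vx v) CMinus}. a \<in> Y"
      using app[OF P8[of "Vx u" "Vx v"]] E_V[OF e(1)] Y_EdgeMIC[OF e] by auto
    then show ?thesis using None unfolding \<sigma>'_def by auto
  next
    case (Some s)
    then show ?thesis using app[OF P2[of "Vx u" "Vx v" "sc s"]] E_V[OF e(1)] Yt(3)[OF Some]
      unfolding \<sigma>'_def by auto
  qed
  have Opp: "Opposite (Vx j) (Vx i) \<in> Y" if j: "(j,i) \<in> E" for j
  proof -
    have ne: "\<mu>' i \<noteq> smult (\<mu>' j) (\<sigma>' (j,i))" using i(3) j unfolding consistent_def by blast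
    have jM: "j \<in> M" and iM: "i \<in> M" using j i(1) M_I1 M_I2 by auto
    have l: "LabelV (Vx j) (sc (\<mu>' j)) \<in> Y" "LabelV (Vx i) (sc (\<mu>' i)) \<in> Y"
      "LabelE (Vx j) (Vx i) (sc (\<sigma>' (j,i))) \<in> Y"
      using LV[OF jM] LV[OF iM] LE[OF j i(1)] by auto
    have V: "i \<in> V" "j \<in> V" using E_V[OF j] by auto
    show ?thesis
    proof (cases "\<sigma>' (j,i)")
      case Pos
      then have "\<mu>' i \<noteq> \<mu>' j" using ne smult_Pos by metis
      then show ?thesis
        using app[OF P10[of "Vx j" "Vx i" "sc (\<mu>' j)" "sc (\<mu>' i)"]] l V Pos by auto
    next
      case Neg
      then have "\<mu>' i = \<mu>' j" using ne by (cases "\<mu>' i"; cases "\<mu>' j") auto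
      then show ?thesis
        using app[OF P9[of "Vx j" "Vx i" "sc (\<mu>' j)"]] l V Neg by auto
    qed
  qed
  have "insert (Active (Vx i)) {Opposite u (Vx i) | u. Edge u (Vx i) \<in> tau_facts V E \<sigma> I \<mu>} \<subseteq> Y"
    using Y_Active[OF i(1)] Opp unfolding tau_Edge by auto
  then show ?thesis using app[OF P11[of "Vx i"]] W_V[OF i(1)] by auto
qed

lemma X_Y: "X \<subseteq> Y"
proof
  fix a assume a: "a \<in> X"
  have LV: "LabelV (Vx v) c \<in> Y" if "v \<in> V" "c = CPlus \<or> c = CMinus" for v c
    using that app[OF P13[of "Vx v"]] app[OF P14[of "Vx v"]] Y_Bottom Yt(1)[of v] by auto
  have LE: "LabelE (Vx u) (Vx v) c \<in> Y" if "(u,v) \<in> E" "c = CPlus \<or> c = CMinus" for u v c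
    using that app[OF P15[of "Vx u" "Vx v"]] app[OF P16[of "Vx u" "Vx v"]] Y_Bottom Yt(2)[of u v] E_V
    by auto
  have Op: "Opposite (Vx u) (Vx v) \<in> Y" if "(u,v) \<in> E" for u v
    using that app[OF P9[of "Vx u" "Vx v" CPlus]] LV LE E_V by auto
  show "a \<in> Y" using a unfolding X_def
    apply (elim UnE)
    subgoal using Ytau by auto
    subgoal using Y_Active by auto
    subgoal using Y_Inactive by auto
    subgoal using Y_EdgeMIC by auto
    subgoal using Y_VMIC by auto
    subgoal using Y_Bottom by auto
    subgoal using LV by auto
    subgoal using LE by auto
    subgoal using Op by auto
    subgoal using Y_LV' by auto
    subgoal using Y_LE' by auto
    subgoal using Y_Recv by auto
    done
qed

end

lemma X_model: "is_model (reduct P X) X"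
  unfolding is_model_def reduct_def using model_rules by fastforce

lemma X_answer: "answer_set P X"
  unfolding answer_set_def using X_model X_Y by blast

end

theorem theorem4:
  fixes V :: "'v set" and E :: "('v \<times> 'v) set" and \<sigma> :: "'v \<times> 'v \<Rightarrow> sign option"
    and I :: "'v set" and \<mu> :: "'v \<Rightarrow> sign option" and W :: "'v set"
  assumes "influence_graph V E \<sigma> I"
    and "vertex_labeling V \<mu>"
    and "is_MIC V E \<sigma> I \<mu> W"
  shows "\<exists>X. answer_set (program V E \<sigma> I \<mu>) X \<and> {c. Active c \<in> X} = Vx ` W"
proof -
  interpret mset V E \<sigma> I \<mu> W using assms by unfold_locales
  have "{c. Active c \<in> X} = Vx ` W" unfolding X_simps by auto
  then show ?thesis using X_answer by blast
qed

end
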